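(* Let $r \geq 2$, let $H$ be a digraph (possibly with loops), and let $D$ be an $H$-colored $r$-transitive digraph. For every $l \geq r-1$ and every $k \geq 2$, $D$ has a $(k,l,H)$-kernel.
   Context: All digraphs are finite. A digraph $D$ is $r$-transitive if for all distinct $u,v\in V(D)$, whenever there is a directed $uv$-path of length $r$, the arc $(u,v)$ belongs to $A(D)$. $D$ has no loops and comes with a map $\rho: A(D)\to V(H)$. For a walk $W=(x_0,\ldots,x_n)$ in $D$, there is an obstruction on $x_i$ if $(\rho(x_{i-1},x_i),\rho(x_i,x_{i+1})) \notin A(H)$; for an open walk this is considered at internal vertices $x_i$, $1\le i\le n-1$, for a closed walk at all $i\in\{0,\ldots,n-1\}$ with indices modulo $n$. $O_H(W)$ is the set of indices with an obstruction; the $H$-length is $l_H(W)=|O_H(W)|+1$ for open $W$ and $|O_H(W)|$ for closed $W$. For $k\ge 2$ and $l\ge 1$, a $(k,l,H)$-kernel is a set $S\subseteq V(D)$ such that for every two distinct $u,v\in S$ every directed $uv$-path in $D$ has $H$-length at least $k$, and for every $x\in V(D)\setminus S$ there is a directed path from $x$ to a vertex of $S$ of $H$-length at most $l$. *)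

theory Defs
  imports Main
begin

definition dwalk :: "('a \<times> 'a) set \<Rightarrow> 'a list \<Rightarrow> bool" where
  "dwalk A xs \<longleftrightarrow> xs \<noteq> [] \<and> (\<forall>i. Suc i < length xs \<longrightarrow> (xs ! i, xs ! Suc i) \<in> A)"

definition dpath :: "('a \<times> 'a) set \<Rightarrow> 'a list \<Rightarrow> bool" where
  "dpath A xs \<longleftrightarrow> dwalk A xs \<and> distinct xs"

definition dpath_from_to :: "('a \<times> 'a) set \<Rightarrow> 'a \<Rightarrow> 'a \<Rightarrow> 'a list \<Rightarrow> bool" where
  "dpath_from_to A u v xs \<longleftrightarrow> dpath A xs \<and> hd xs = u \<and> last xs = v"

definition r_transitive :: "'a set \<Rightarrow> ('a \<times> 'a) set \<Rightarrow> nat \<Rightarrow> bool" where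
  "r_transitive V A r \<longleftrightarrow>
     (\<forall>u\<in>V. \<forall>v\<in>V. \<forall>xs. u \<noteq> v \<and> dpath_from_to A u v xs \<and> length xs = r + 1
        \<longrightarrow> (u, v) \<in> A)"

definition obstructions_open :: "('b \<times> 'b) set \<Rightarrow> ('a \<times> 'a \<Rightarrow> 'b) \<Rightarrow> 'a list \<Rightarrow> nat set" where
  "obstructions_open AH \<rho> xs =
     {i. 1 \<le> i \<and> Suc i < length xs \<and>
         (\<rho> (xs ! (i - 1), xs ! i), \<rho> (xs ! i, xs ! Suc i)) \<notin> AH}"

definition H_length_open :: "('b \<times> 'b) set \<Rightarrow> ('a \<times> 'a \<Rightarrow> 'b) \<Rightarrow> 'a list \<Rightarrow> nat" where
  "H_length_open AH \<rho> xs = card (obstructions_open AH \<rho> xs) + 1"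

definition klH_kernel ::
  "'a set \<Rightarrow> ('a \<times> 'a) set \<Rightarrow> ('b \<times> 'b) set \<Rightarrow> ('a \<times> 'a \<Rightarrow> 'b) \<Rightarrow> nat \<Rightarrow> nat \<Rightarrow> 'a set \<Rightarrow> bool" where
  "klH_kernel V A AH \<rho> k l S \<longleftrightarrow>
     S \<subseteq> V \<and>
     (\<forall>u\<in>S. \<forall>v\<in>S. \<forall>xs. u \<noteq> v \<and> dpath_from_to A u v xs \<longrightarrow> H_length_open AH \<rho> xs \<ge> k) \<and>
     (\<forall>x\<in>V - S. \<exists>s\<in>S. \<exists>xs. dpath_from_to A x s xs \<and> H_length_open AH \<rho> xs \<le> l)"

end

theory Submission
  imports Defs
begin

lemma dwalk_Cons: "dwalk A (x # ys) \<longleftrightarrow> (ys = [] \<or> ((x, hd ys) \<in> A \<and> dwalk A ys))"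
proof (cases ys)
  case Nil then show ?thesis by (simp add: dwalk_def)
next
  case (Cons y zs)
  show ?thesis
  proof
    assume h: "dwalk A (x # ys)"
    have "(x, hd ys) \<in> A" using h Cons unfolding dwalk_def by (metis hd_conv_nth length_Cons less_Suc_eq_0_disj list.discI nth_Cons_0 nth_Cons_Suc zero_less_Suc)
    moreover have "dwalk A ys" unfolding dwalk_def
    proof (intro conjI allI impI)
      show "ys \<noteq> []" using Cons by simp
      fix i assume "Suc i < length ys"
      then have "Suc (Suc i) < length (x # ys)" by simp
      then have "((x # ys) ! Suc i, (x # ys) ! Suc (Suc i)) \<in> A" using h unfolding dwalk_def by blast
      then show "(ys ! i, ys ! Suc i) \<in> A" by simp
    qed
    ultimately show "ys = [] \<or> ((x, hd ys) \<in> A \<and> dwalk A ys)" by simp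
  next
    assume h: "ys = [] \<or> ((x, hd ys) \<in> A \<and> dwalk A ys)"
    then have a: "(x, y) \<in> A" and w: "dwalk A ys" using Cons by auto
    show "dwalk A (x # ys)" unfolding dwalk_def
    proof (intro conjI allI impI)
      fix i assume "Suc i < length (x # ys)"
      then show "((x # ys) ! i, (x # ys) ! Suc i) \<in> A"
        using a w Cons unfolding dwalk_def by (cases i) auto
    qed simp
  qed
qed

lemma dwalk_append: "xs \<noteq> [] \<Longrightarrow> ys \<noteq> [] \<Longrightarrow>
  dwalk A (xs @ ys) \<longleftrightarrow> dwalk A xs \<and> dwalk A ys \<and> (last xs, hd ys) \<in> A"
proof (induction xs)
  case Nil then show ?case by simp
next
  case (Cons x xs)
  show ?case
  proof (cases "xs = []")
    case True then show ?thesis using Cons by (auto simp add: dwalk_Cons)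
  next
    case False then show ?thesis using Cons by (auto simp add: dwalk_Cons)
  qed
qed

lemma rtrancl_walk: "(x, y) \<in> A\<^sup>* \<Longrightarrow> \<exists>xs. dwalk A xs \<and> hd xs = x \<and> last xs = y"
proof (induction rule: converse_rtrancl_induct)
  case base then show ?case by (intro exI[of _ "[y]"]) (simp add: dwalk_def)
next
  case (step x z)
  then obtain xs where "dwalk A xs" "hd xs = z" "last xs = y" by blast
  moreover have "xs \<noteq> []" using \<open>dwalk A xs\<close> dwalk_def by blast
  ultimately show ?case using step by (intro exI[of _ "x # xs"]) (auto simp: dwalk_Cons)
qed

lemma walk_rtrancl: "dwalk A xs \<Longrightarrow> (hd xs, last xs) \<in> A\<^sup>*"
proof (induction xs)
  case Nil then show ?case by (simp add: dwalk_def)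
next
  case (Cons x xs)
  then show ?case
    by (cases "xs = []") (auto simp: dwalk_Cons intro: converse_rtrancl_into_rtrancl)
qed

lemma dwalk_take: "dwalk A xs \<Longrightarrow> 0 < n \<Longrightarrow> dwalk A (take n xs)"
  unfolding dwalk_def by auto

lemma dwalk_drop: "dwalk A xs \<Longrightarrow> n < length xs \<Longrightarrow> dwalk A (drop n xs)"
  unfolding dwalk_def
proof (intro conjI allI impI)
  assume h: "xs \<noteq> [] \<and> (\<forall>i. Suc i < length xs \<longrightarrow> (xs ! i, xs ! Suc i) \<in> A)" "n < length xs"
  then show "drop n xs \<noteq> []" by simp
  fix i assume "Suc i < length (drop n xs)"
  then have "Suc (n + i) < length xs" by simp
  then have "(xs ! (n + i), xs ! Suc (n + i)) \<in> A" using h by blast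
  then show "(drop n xs ! i, drop n xs ! Suc i) \<in> A" using h by simp
qed

lemma rtrancl_V: "(v, u) \<in> A\<^sup>* \<Longrightarrow> v \<in> V \<Longrightarrow> A \<subseteq> V \<times> V \<Longrightarrow> u \<in> V"
  by (induction rule: rtrancl_induct) auto

lemma short_path:
  assumes AV: "A \<subseteq> V \<times> V" and r2: "r \<ge> 2" and rt: "r_transitive V A r"
    and xs: "dwalk A xs" "hd xs = x" "last xs = s" and xV: "x \<in> V"
  shows "\<exists>ys. dpath_from_to A x s ys \<and> length ys \<le> r"
proof -
  let ?P = "\<lambda>ys. dwalk A ys \<and> hd ys = x \<and> last ys = s"
  obtain ys where P: "?P ys" and m: "\<forall>zs. ?P zs \<longrightarrow> length ys \<le> length zs"
    using ex_has_least_nat[of ?P xs length] xs by blast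
  have ne: "ys \<noteq> []" using P dwalk_def by blast
  have dist: "distinct ys"
  proof (rule ccontr)
    assume "\<not> distinct ys"
    then obtain a y b c where ys: "ys = a @ [y] @ b @ [y] @ c"
      using not_distinct_decomp by blast
    let ?zs = "a @ [y] @ c"
    have w: "dwalk A ys" using P by blast
    have "dwalk A (a @ [y])"
      using w unfolding ys by (metis append_assoc append_is_Nil_conv dwalk_append not_Cons_self2)
    moreover have "dwalk A ([y] @ c)"
      using w dwalk_append[of "a @ [y] @ b" "[y] @ c" A] unfolding ys by simp
    ultimately have "dwalk A ?zs"
      using dwalk_append[of "a @ [y]" c A] by (cases "c = []") (auto simp: dwalk_Cons)
    moreover have "hd ?zs = x" using P ys by (cases a) auto
    moreover have "last ?zs = s" using P ys by (cases c) auto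
    ultimately have "length ys \<le> length ?zs" using m by blast
    then show False unfolding ys by simp
  qed
  have len: "length ys \<le> r"
  proof (rule ccontr)
    assume "\<not> length ys \<le> r"
    then have lr: "r < length ys" by simp
    let ?p = "take (Suc r) ys"
    have w: "dwalk A ys" using P by blast
    have "dwalk A ?p" using w dwalk_take by blast
    moreover have "distinct ?p" using dist by simp
    moreover have "hd ?p = ys ! 0" using ne by (cases ys) auto
    moreover have "last ?p = ys ! r" using lr by (simp add: take_Suc_conv_app_nth)
    ultimately have pw: "dpath_from_to A (ys ! 0) (ys ! r) ?p"
      unfolding dpath_from_to_def dpath_def by blast
    have neq: "ys ! 0 \<noteq> ys ! r" using dist lr r2 nth_eq_iff_index_eq by fastforce
    have y0: "ys ! 0 \<in> V" using xV P ne by (simp add: hd_conv_nth)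
    have "Suc (r - 1) < length ys" using lr r2 by simp
    then have "(ys ! (r - 1), ys ! Suc (r - 1)) \<in> A" using w unfolding dwalk_def by blast
    moreover have "Suc (r - 1) = r" using r2 by simp
    ultimately have yr: "ys ! r \<in> V" using AV by auto
    have "length ?p = r + 1" using lr by simp
    then have arc: "(ys ! 0, ys ! r) \<in> A"
      using rt y0 yr neq pw unfolding r_transitive_def by blast
    let ?zs = "[ys ! 0] @ drop r ys"
    have dw: "dwalk A (drop r ys)" using dwalk_drop w lr by blast
    have "dwalk A ?zs" using dw arc lr by (subst dwalk_append) (auto simp: hd_drop_conv_nth dwalk_def)
    moreover have "hd ?zs = x" using P ne by (simp add: hd_conv_nth)
    moreover have "last ?zs = s" using P lr by simp
    ultimately have "length ys \<le> length ?zs" using m by blast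
    then show False using lr r2 by simp
  qed
  show ?thesis using P dist len unfolding dpath_from_to_def dpath_def by blast
qed

lemma H_len_bound: "length xs \<ge> 2 \<Longrightarrow> H_length_open AH \<rho> xs \<le> length xs - 1"
proof -
  assume "length xs \<ge> 2"
  have "obstructions_open AH \<rho> xs \<subseteq> {1..<length xs - 1}"
    unfolding obstructions_open_def by auto
  then have "card (obstructions_open AH \<rho> xs) \<le> length xs - 2"
    by (metis card_atLeastLessThan card_mono finite_atLeastLessThan diff_diff_left one_add_one)
  then show ?thesis using \<open>length xs \<ge> 2\<close> unfolding H_length_open_def by simp
qed

lemma reach_terminal:
  assumes fin: "finite V" and AV: "A \<subseteq> V \<times> V" and xV: "x \<in> V"
  shows "\<exists>w. (x, w) \<in> A\<^sup>* \<and> w \<in> V \<and> (\<forall>w'. (w, w') \<in> A\<^sup>* \<longrightarrow> (w', w) \<in> A\<^sup>*)"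
proof -
  let ?R = "\<lambda>w. {u. (w, u) \<in> A\<^sup>*}"
  have finR: "finite (?R w)" if "w \<in> V" for w
    using fin by (rule finite_subset[rotated]) (use rtrancl_V[OF _ that AV] in blast)
  obtain w where w: "(x, w) \<in> A\<^sup>*" and m: "\<forall>w'. (x, w') \<in> A\<^sup>* \<longrightarrow> card (?R w) \<le> card (?R w')"
    using ex_has_least_nat[of "\<lambda>w. (x, w) \<in> A\<^sup>*" x "\<lambda>w. card (?R w)"] by blast
  have wV: "w \<in> V" using rtrancl_V[OF w xV AV] .
  have "(w', w) \<in> A\<^sup>*" if "(w, w') \<in> A\<^sup>*" for w'
  proof -
    have sub: "?R w' \<subseteq> ?R w" using that by (auto intro: rtrancl_trans)
    have "(x, w') \<in> A\<^sup>*" using w that by (rule rtrancl_trans)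
    then have "card (?R w) \<le> card (?R w')" using m by blast
    then have "?R w' = ?R w" using sub finR[OF wV] by (metis card_seteq)
    then show ?thesis by auto
  qed
  then show ?thesis using w wV by blast
qed

theorem theorem11:
  fixes V :: "'a set" and A :: "('a \<times> 'a) set"
    and VH :: "'b set" and AH :: "('b \<times> 'b) set"
    and \<rho> :: "'a \<times> 'a \<Rightarrow> 'b"
    and r k l :: nat
  assumes "finite V" and "A \<subseteq> V \<times> V" and "\<forall>x. (x, x) \<notin> A"
    and "finite VH" and "AH \<subseteq> VH \<times> VH"
    and "\<forall>e\<in>A. \<rho> e \<in> VH"
    and "r \<ge> 2" and "r_transitive V A r"
    and "l \<ge> r - 1" and "k \<ge> 2"
  shows "\<exists>S. klH_kernel V A AH \<rho> k l S"
proof -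
  note fin = assms(1) and AV = assms(2) and r2 = assms(7) and rt = assms(8) and lr = assms(9)
  define T where "T = {v. v \<in> V \<and> (\<forall>w. (v, w) \<in> A\<^sup>* \<longrightarrow> (w, v) \<in> A\<^sup>*)}"
  define C where "C v = {u. (v, u) \<in> A\<^sup>* \<and> (u, v) \<in> A\<^sup>*}" for v
  define rep where "rep v = (SOME u. u \<in> C v)" for v
  define S where "S = rep ` T"
  have repC: "rep v \<in> C v" for v
    unfolding rep_def by (rule someI[of _ v]) (simp add: C_def)
  have Ceq: "C v = C u" if "(v, u) \<in> A\<^sup>*" "(u, v) \<in> A\<^sup>*" for u v
    using that unfolding C_def by (auto intro: rtrancl_trans)
  have repT: "rep v \<in> T" if "v \<in> T" for v
  proof -
    have a: "(v, rep v) \<in> A\<^sup>*" "(rep v, v) \<in> A\<^sup>*" using repC[of v] unfolding C_def by auto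
    have "rep v \<in> V" using rtrancl_V[OF a(1) _ AV] that unfolding T_def by blast
    moreover have "(w, rep v) \<in> A\<^sup>*" if "(rep v, w) \<in> A\<^sup>*" for w
    proof -
      have "(v, w) \<in> A\<^sup>*" using a(1) that by (rule rtrancl_trans)
      then have "(w, v) \<in> A\<^sup>*" using \<open>v \<in> T\<close> unfolding T_def by blast
      then show ?thesis using a(1) by (rule rtrancl_trans)
    qed
    ultimately show ?thesis unfolding T_def by blast
  qed
  have "klH_kernel V A AH \<rho> k l S"
    unfolding klH_kernel_def
  proof (intro conjI ballI allI impI)
    show "S \<subseteq> V" unfolding S_def using repT T_def by blast
  next
    fix u v xs assume u: "u \<in> S" and v: "v \<in> S" and h: "u \<noteq> v \<and> dpath_from_to A u v xs"
    obtain v1 where v1: "v1 \<in> T" "u = rep v1" using u S_def by blast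
    obtain v2 where v2: "v2 \<in> T" "v = rep v2" using v S_def by blast
    have uv: "(u, v) \<in> A\<^sup>*" using h walk_rtrancl unfolding dpath_from_to_def dpath_def by blast
    have "u \<in> T" using repT v1 by simp
    then have vu: "(v, u) \<in> A\<^sup>*" using uv unfolding T_def by blast
    have "C v1 = C u" using repC[of v1] v1 Ceq unfolding C_def by blast
    moreover have "C v2 = C v" using repC[of v2] v2 Ceq unfolding C_def by blast
    moreover have "C u = C v" using Ceq uv vu by blast
    ultimately have "rep v1 = rep v2" unfolding rep_def by simp
    then show "H_length_open AH \<rho> xs \<ge> k" using h v1 v2 by simp
  next
    fix x assume x: "x \<in> V - S"
    obtain w where w: "(x, w) \<in> A\<^sup>*" "w \<in> V" "\<forall>w'. (w, w') \<in> A\<^sup>* \<longrightarrow> (w', w) \<in> A\<^sup>*"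
      using reach_terminal[OF fin AV] x by blast
    have wT: "w \<in> T" using w T_def by blast
    let ?s = "rep w"
    have sS: "?s \<in> S" using wT S_def by blast
    have "(w, ?s) \<in> A\<^sup>*" using repC[of w] C_def by blast
    then have xs: "(x, ?s) \<in> A\<^sup>*" using w(1) by (rule rtrancl_trans[rotated])
    obtain ws where "dwalk A ws" "hd ws = x" "last ws = ?s" using rtrancl_walk[OF xs] by blast
    then obtain ys where ys: "dpath_from_to A x ?s ys" "length ys \<le> r"
      using short_path[OF AV r2 rt] x by blast
    have "x \<noteq> ?s" using x sS by blast
    moreover have ne: "ys \<noteq> []" using ys(1) unfolding dpath_from_to_def dpath_def dwalk_def by blast
    moreover have "length ys \<noteq> 1"
    proof
      assume "length ys = 1"
      then obtain a where "ys = [a]" by (metis One_nat_def length_0_conv length_Suc_conv)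
      then show False using ys(1) \<open>x \<noteq> ?s\<close> unfolding dpath_from_to_def by auto
    qed
    ultimately have "length ys \<ge> 2" by (cases ys) (auto simp: Suc_le_eq)
    then have "H_length_open AH \<rho> ys \<le> l" using H_len_bound[of ys AH \<rho>] ys(2) lr by linarith
    then show "\<exists>s\<in>S. \<exists>xs. dpath_from_to A x s xs \<and> H_length_open AH \<rho> xs \<le> l"
      using sS ys(1) by blast
  qed
  then show ?thesis by blast
qed

end
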